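(* Let $f$ be a linear Anosov diffeomorphism of $\mathbb{T}^2$ induced by an integer matrix $L$ with $\det L=-1$ (orientation-reversing). Then for every linear involution $R$ of $\mathbb{T}^2$ (induced by an integer matrix $A$ with $\det A=\pm1$ and $R\circ R=\mathrm{Id}$), $f$ is not $R$-reversible, i.e. $R\circ f\neq f^{-1}\circ R$.
   Context: $\mathbb{T}^2=\mathbb{R}^2/\mathbb{Z}^2$. A diffeomorphism of $\mathbb{T}^2$ induced by an integer matrix $M$ with $\det M=\pm1$ is the map $\pi(v)\mapsto\pi(Mv)$, $\pi$ the projection. A linear Anosov diffeomorphism is one induced by such a matrix with no eigenvalue of modulus one. $f$ is $R$-reversible if $R\circ f=f^{-1}\circ R$. *)

theory Defs
  imports "HOL-Analysis.Analysis"
begin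

text \<open>The torus T^2 = R^2/Z^2 is represented by its fundamental domain [0,1)^2;
  the projection pi sends v to its componentwise fractional part.\<close>

definition torus :: "(real^2) set" where
  "torus = {v. \<forall>i. 0 \<le> v$i \<and> v$i < 1}"

definition tproj :: "real^2 \<Rightarrow> real^2" where
  "tproj v = (\<chi> i. frac (v$i))"

definition unimodular :: "int^2^2 \<Rightarrow> bool" where
  "unimodular M \<longleftrightarrow> det M = 1 \<or> det M = -1"

definition induced :: "int^2^2 \<Rightarrow> real^2 \<Rightarrow> real^2" where
  "induced M v = tproj ((\<chi> i j. real_of_int (M$i$j)) *v v)"

definition hyperbolic :: "int^2^2 \<Rightarrow> bool" where
  "hyperbolic M \<longleftrightarrow>
     (\<forall>(c::complex) (v::complex^2). v \<noteq> 0 \<and> (\<chi> i j. complex_of_int (M$i$j)) *v v = c *s v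
        \<longrightarrow> cmod c \<noteq> 1)"

definition linear_anosov :: "int^2^2 \<Rightarrow> bool" where
  "linear_anosov M \<longleftrightarrow> unimodular M \<and> hyperbolic M"

definition reversible_on_torus :: "(real^2 \<Rightarrow> real^2) \<Rightarrow> (real^2 \<Rightarrow> real^2) \<Rightarrow> bool" where
  "reversible_on_torus R f \<longleftrightarrow> (\<forall>x\<in>torus. R (f x) = inv_into torus f (R x))"

end

theory Submission
  imports Defs
begin

lemma induced_comp:
  "induced M v $ i = frac (real_of_int (M$i$1) * v$1 + real_of_int (M$i$2) * v$2)"
  by (simp add: induced_def tproj_def matrix_vector_mult_def sum_2)

lemma frac_lin:
  fixes a b :: int and u w :: real
  shows "frac (a * frac u + b * frac w) = frac (a * u + b * w)"
proof -
  have "a * frac u + b * frac w = (a * u + b * w) + of_int (- (a * floor u + b * floor w))"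
    by (simp add: frac_def algebra_simps)
  then show ?thesis by (simp only: frac_add_of_int_right)
qed

lemma induced_induced: "induced M (induced N x) = induced (M ** N) x"
proof -
  have "induced M (induced N x) $ i = induced (M ** N) x $ i" for i
  proof -
    have "induced M (induced N x) $ i =
      frac (real_of_int (M$i$1) * frac (real_of_int (N$1$1) * x$1 + real_of_int (N$1$2) * x$2)
          + real_of_int (M$i$2) * frac (real_of_int (N$2$1) * x$1 + real_of_int (N$2$2) * x$2))"
      by (simp add: induced_comp)
    also have "\<dots> = frac (real_of_int (M$i$1) * (real_of_int (N$1$1) * x$1 + real_of_int (N$1$2) * x$2)
          + real_of_int (M$i$2) * (real_of_int (N$2$1) * x$1 + real_of_int (N$2$2) * x$2))"
      by (rule frac_lin[of "M$i$1" _ "M$i$2"])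
    also have "\<dots> = induced (M ** N) x $ i"
      by (simp add: induced_comp matrix_matrix_mult_def sum_2 algebra_simps)
    finally show ?thesis .
  qed
  then show ?thesis by (simp add: vec_eq_iff)
qed

lemma induced_in_torus: "induced M x \<in> torus"
  by (simp add: torus_def induced_def tproj_def frac_lt_1)

lemma induced_id: "x \<in> torus \<Longrightarrow> induced (mat 1) x = x"
  by (simp add: induced_comp vec_eq_iff forall_2 mat_def torus_def)

lemma frac_eq_Ints: "frac a = frac b \<Longrightarrow> a - b \<in> \<int>"
  by (metis frac_def diff_diff_eq2 add_diff_cancel_left' Ints_of_int Ints_diff diff_add_cancel)

lemma induced_inj:
  assumes "\<forall>x\<in>torus. induced M x = induced N x"
  shows "M = N"
proof -
  have "M$i$j = N$i$j" for i j
  proof -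
    define d where "d = M$i$j - N$i$j"
    define t :: real where "t = 1 / (\<bar>of_int d\<bar> + 2)"
    have t0: "0 < t" "t < 1"
      by (auto simp: t_def d_def)
    define x :: "real^2" where "x = axis j t"
    have "x \<in> torus" using t0 by (auto simp: x_def torus_def axis_def)
    then have "induced M x $ i = induced N x $ i" using assms by simp
    moreover have "\<And>K. induced K x $ i = frac (real_of_int (K$i$j) * t)"
      using exhaust_2[of j] by (auto simp: induced_comp x_def axis_def)
    ultimately have "real_of_int (M$i$j) * t - real_of_int (N$i$j) * t \<in> \<int>"
      by (metis frac_eq_Ints)
    then have "of_int d * t \<in> \<int>" by (simp add: d_def algebra_simps)
    then obtain k where k: "of_int d * t = of_int k" by (metis Ints_cases)
    have "\<bar>of_int d * t\<bar> < 1"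
      by (simp add: t_def abs_mult)
    then have "k = 0" using k by simp
    then show ?thesis using k t0 by (simp add: d_def)
  qed
  then show ?thesis by (simp add: vec_eq_iff)
qed

lemma alg:
  fixes a b c d p q r s :: int
  assumes "a*d - b*c = -1" "p* s - q*r = 1 \<or> p* s - q*r = -1"
    "(a*p+b*r)*a + (a*q+b* s)*c = p"
    "(a*p+b*r)*b + (a*q+b* s)*d = q"
    "(c*p+d*r)*a + (c*q+d* s)*c = r"
    "(c*p+d*r)*b + (c*q+d* s)*d = s"
  shows "a + d = 0"
  using assms by algebra

lemma not_hyp:
  assumes tr: "L$1$1 + L$2$2 = 0" and dt: "det L = -1"
  shows "\<not> hyperbolic L"
proof
  assume h: "hyperbolic L"
  define a where "a = L$1$1"
  define b where "b = L$1$2"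
  define c where "c = L$2$1"
  have dd: "L$2$2 = -a" using tr by (simp add: a_def)
  have e: "a*a + b*c = 1" using dt dd by (simp add: det_2 a_def b_def c_def algebra_simps)
  define Lc :: "complex^2^2" where "Lc = (\<chi> i j. complex_of_int (L$i$j))"
  have ev: "Lc *v v = (1::complex) *s v \<Longrightarrow> v \<noteq> 0 \<Longrightarrow> False" for v
    using h unfolding hyperbolic_def Lc_def by (metis norm_one)
  show False
  proof (cases "b = 0 \<and> a = 1")
    case True
    then have c1: "L$1$1 = 1" "L$1$2 = 0" "L$2$2 = -1" using dd by (auto simp: a_def b_def)
    let ?v = "vector [2, complex_of_int c] :: complex^2"
    have "Lc *v ?v = 1 *s ?v"
      using c1 by (simp add: vec_eq_iff forall_2 Lc_def matrix_vector_mult_def sum_2 c_def algebra_simps)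
    moreover have "?v \<noteq> 0" by (simp add: vec_eq_iff forall_2)
    ultimately show False using ev by blast
  next
    case False
    let ?v = "vector [complex_of_int b, 1 - complex_of_int a] :: complex^2"
    have e': "complex_of_int a * complex_of_int a + complex_of_int b * complex_of_int c = 1"
      using e by (metis of_int_1 of_int_add of_int_mult)
    have "Lc *v ?v = 1 *s ?v"
      using dd e' by (simp add: vec_eq_iff forall_2 Lc_def matrix_vector_mult_def sum_2
          a_def [symmetric] b_def [symmetric] c_def [symmetric] algebra_simps)
    moreover have "?v \<noteq> 0" using False by (auto simp: vec_eq_iff forall_2)
    ultimately show False using ev by blast
  qed
qed

theorem mainTheorem4:
  fixes L A :: "int^2^2"
  assumes "linear_anosov L"
    and "det L = -1"
    and "unimodular A"
    and "\<forall>x\<in>torus. induced A (induced A x) = x"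
  shows "\<not> reversible_on_torus (induced A) (induced L)"
proof
  assume rev: "reversible_on_torus (induced A) (induced L)"
  define Li :: "int^2^2" where "Li = vector [vector [- L$2$2, L$1$2], vector [L$2$1, - L$1$1]]"
  have LLi: "L ** Li = mat 1"
    using assms(2) by (simp add: Li_def vec_eq_iff forall_2 matrix_matrix_mult_def sum_2 mat_def det_2 algebra_simps)
  have surj: "y \<in> induced L ` torus" if "y \<in> torus" for y
  proof
    show "y = induced L (induced Li y)" using that by (simp add: induced_induced LLi induced_id)
  qed (rule induced_in_torus)
  have "\<forall>x\<in>torus. induced (L ** (A ** L)) x = induced A x"
  proof
    fix x assume x: "x \<in> torus"
    have "induced A (induced L x) = inv_into torus (induced L) (induced A x)"
      using rev x by (simp add: reversible_on_torus_def)
    then have "induced L (induced A (induced L x)) = induced A x"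
      using f_inv_into_f[OF surj[OF induced_in_torus]] by simp
    then show "induced (L ** (A ** L)) x = induced A x" by (simp add: induced_induced)
  qed
  then have eq: "L ** (A ** L) = A" by (rule induced_inj)
  have "L$1$1 + L$2$2 = 0"
  proof (rule alg)
    show "L$1$1 * L$2$2 - L$1$2 * L$2$1 = -1" using assms(2) by (simp add: det_2)
    show "A$1$1 * A$2$2 - A$1$2 * A$2$1 = 1 \<or> A$1$1 * A$2$2 - A$1$2 * A$2$1 = -1"
      using assms(3) by (simp add: unimodular_def det_2)
  qed (use eq in \<open>simp_all add: vec_eq_iff forall_2 matrix_matrix_mult_def sum_2 algebra_simps\<close>)
  then show False using not_hyp assms(1,2) by (simp add: linear_anosov_def)
qed

end
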